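(* Consider a Behavioral Security Game on an attack graph in which the attack success probability on each edge is $p_{i,j}(x_{i,j})=e^{-x_{i,j}}$, and let $B=\sum_{D_k\in\mathcal{D}}B_k$ be the sum of the budgets of all defenders. Then for any attack graph and any profile of behavioral levels $\{\alpha_k\}$ with $\alpha_k\in(0,1]$, the Price of Behavioral Anarchy satisfies $PoBA\le\exp(B)$.
   Context: An attack graph is a finite directed graph $G=(V,\mathcal{E})$ with source node $v_s$; $\mathcal{P}_m$ is the set of directed paths from $v_s$ to $v_m$ (as sets of edges); assets are reachable from $v_s$. Each defender $D_k\in\mathcal{D}$ owns assets $V_k\subseteq V\setminus\{v_s\}$ with losses $L_m\ge0$, has budget $B_k\ge0$ and strategy set $X_k=\{x_k\in\mathbb{R}^{|\mathcal{E}|}_{\ge0}:\mathbf{1}^Tx_k\le B_k\}$; the total investment on edge $(v_i,v_j)$ is $x_{i,j}=\sum_k x^k_{i,j}$. Defender $D_k$'s perceived cost is $C_k(x_k,\mathbf{x}_{-k})=\sum_{v_m\in V_k}L_m\max_{P\in\mathcal{P}_m}\prod_{(v_i,v_j)\in P}w_k(p_{i,j}(x_{i,j}))$ with Prelec weighting $w_k(p)=\exp[-(-\log p)^{\alpha_k}]$, and her true expected cost $\hat C_k$ is the same expression with $w_k$ replaced by the identity. Let $\hat C(\mathbf{x})=\sum_{D_k}\hat C_k(\mathbf{x})$. Let $X^{NE}$ be the set of pure Nash equilibria, i.e., profiles $\bar{\mathbf{x}}$ with $\bar x_k\in\arg\min_{x\in X_k}C_k(x,\bar{\mathbf{x}}_{-k})$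 for all $D_k$. Let $X^{Soc}=\{\mathbf{x}\in\mathbb{R}^{|\mathcal{D}||\mathcal{E}|}_{\ge0}:\mathbf{1}^T\mathbf{x}\le\sum_kB_k\}$ and $\mathbf{x}^*\in\arg\min_{\mathbf{x}\in X^{Soc}}\hat C(\mathbf{x})$. The Price of Behavioral Anarchy is $PoBA=\sup_{\bar{\mathbf{x}}\in X^{NE}}\hat C(\bar{\mathbf{x}})/\hat C(\mathbf{x}^* )$. *)

theory Defs
  imports "HOL-Analysis.Analysis"
begin

type_synonym 'v edge = "'v \<times> 'v"

definition paths :: "'v edge set \<Rightarrow> 'v \<Rightarrow> 'v \<Rightarrow> 'v edge set set" where
  "paths E s t = { set (zip us (tl us)) | us. us \<noteq> [] \<and> hd us = s \<and> last us = t
                     \<and> distinct us \<and> set (zip us (tl us)) \<subseteq> E }"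

definition prelec :: "real \<Rightarrow> real \<Rightarrow> real" where
  "prelec \<alpha> p = exp (- ((- ln p) powr \<alpha>))"

definition succ_prob :: "real \<Rightarrow> real" where
  "succ_prob t = exp (- t)"

definition strategy :: "'v edge set \<Rightarrow> real \<Rightarrow> ('v edge \<Rightarrow> real) \<Rightarrow> bool" where
  "strategy E Bk y \<longleftrightarrow> (\<forall>e. 0 \<le> y e) \<and> (\<forall>e. e \<notin> E \<longrightarrow> y e = 0) \<and> sum y E \<le> Bk"

definition total_inv :: "'d set \<Rightarrow> ('d \<Rightarrow> 'v edge \<Rightarrow> real) \<Rightarrow> 'v edge \<Rightarrow> real" where
  "total_inv D x e = (\<Sum>k\<in>D. x k e)"

definition defender_cost ::
  "(real \<Rightarrow> real) \<Rightarrow> 'v edge set \<Rightarrow> 'v \<Rightarrow> 'v set \<Rightarrow> ('v \<Rightarrow> real) \<Rightarrow> ('v edge \<Rightarrow> real) \<Rightarrow> real" where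
  "defender_cost w E s Vk L X =
     (\<Sum>m\<in>Vk. L m * Max ((\<lambda>P. \<Prod>e\<in>P. w (succ_prob (X e))) ` paths E s m))"

definition perceived_cost ::
  "'v edge set \<Rightarrow> 'v \<Rightarrow> 'd set \<Rightarrow> ('d \<Rightarrow> 'v set) \<Rightarrow> ('v \<Rightarrow> real) \<Rightarrow> ('d \<Rightarrow> real)
    \<Rightarrow> 'd \<Rightarrow> ('d \<Rightarrow> 'v edge \<Rightarrow> real) \<Rightarrow> real" where
  "perceived_cost E s D V L \<alpha> k x = defender_cost (prelec (\<alpha> k)) E s (V k) L (total_inv D x)"

definition true_cost ::
  "'v edge set \<Rightarrow> 'v \<Rightarrow> 'd set \<Rightarrow> ('d \<Rightarrow> 'v set) \<Rightarrow> ('v \<Rightarrow> real)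
    \<Rightarrow> 'd \<Rightarrow> ('d \<Rightarrow> 'v edge \<Rightarrow> real) \<Rightarrow> real" where
  "true_cost E s D V L k x = defender_cost (\<lambda>p. p) E s (V k) L (total_inv D x)"

definition social_cost ::
  "'v edge set \<Rightarrow> 'v \<Rightarrow> 'd set \<Rightarrow> ('d \<Rightarrow> 'v set) \<Rightarrow> ('v \<Rightarrow> real) \<Rightarrow> ('d \<Rightarrow> 'v edge \<Rightarrow> real) \<Rightarrow> real" where
  "social_cost E s D V L x = (\<Sum>k\<in>D. true_cost E s D V L k x)"

definition is_NE ::
  "'v edge set \<Rightarrow> 'v \<Rightarrow> 'd set \<Rightarrow> ('d \<Rightarrow> 'v set) \<Rightarrow> ('v \<Rightarrow> real) \<Rightarrow> ('d \<Rightarrow> real) \<Rightarrow> ('d \<Rightarrow> real)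
    \<Rightarrow> ('d \<Rightarrow> 'v edge \<Rightarrow> real) \<Rightarrow> bool" where
  "is_NE E s D V L B \<alpha> x \<longleftrightarrow>
     (\<forall>k\<in>D. strategy E (B k) (x k) \<and>
        (\<forall>y. strategy E (B k) y \<longrightarrow>
              perceived_cost E s D V L \<alpha> k x \<le> perceived_cost E s D V L \<alpha> k (x(k := y))))"

definition soc_feasible ::
  "'v edge set \<Rightarrow> 'd set \<Rightarrow> ('d \<Rightarrow> real) \<Rightarrow> ('d \<Rightarrow> 'v edge \<Rightarrow> real) \<Rightarrow> bool" where
  "soc_feasible E D B x \<longleftrightarrow>
     (\<forall>k\<in>D. \<forall>e. 0 \<le> x k e \<and> (e \<notin> E \<longrightarrow> x k e = 0)) \<and>
     (\<Sum>k\<in>D. \<Sum>e\<in>E. x k e) \<le> (\<Sum>k\<in>D. B k)"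

definition is_soc_opt ::
  "'v edge set \<Rightarrow> 'v \<Rightarrow> 'd set \<Rightarrow> ('d \<Rightarrow> 'v set) \<Rightarrow> ('v \<Rightarrow> real) \<Rightarrow> ('d \<Rightarrow> real)
    \<Rightarrow> ('d \<Rightarrow> 'v edge \<Rightarrow> real) \<Rightarrow> bool" where
  "is_soc_opt E s D V L B x \<longleftrightarrow> soc_feasible E D B x \<and>
     (\<forall>y. soc_feasible E D B y \<longrightarrow> social_cost E s D V L x \<le> social_cost E s D V L y)"

end

theory Submission
  imports Defs
begin

lemma finite_paths: "finite E \<Longrightarrow> finite (paths E s t)"
proof -
  assume "finite E"
  have "paths E s t \<subseteq> Pow E" unfolding paths_def by auto
  thus ?thesis using \<open>finite E\<close> by (meson finite_Pow_iff finite_subset)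
qed

lemma paths_sub: "P \<in> paths E s t \<Longrightarrow> P \<subseteq> E"
  unfolding paths_def by auto

lemma cost_upper:
  assumes "finite E" "\<forall>e. 0 \<le> X e" "\<forall>m\<in>Vk. 0 \<le> L m \<and> paths E s m \<noteq> {}"
  shows "defender_cost (\<lambda>p. p) E s Vk L X \<le> sum L Vk"
  unfolding defender_cost_def
proof (rule sum_mono)
  fix m assume m: "m \<in> Vk"
  have "Max ((\<lambda>P. \<Prod>e\<in>P. succ_prob (X e)) ` paths E s m) \<le> 1"
  proof (rule Max.boundedI)
    show "finite ((\<lambda>P. \<Prod>e\<in>P. succ_prob (X e)) ` paths E s m)"
      using finite_paths[OF assms(1)] by simp
    show "(\<lambda>P. \<Prod>e\<in>P. succ_prob (X e)) ` paths E s m \<noteq> {}" using assms(3) m by simp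
    fix a assume "a \<in> (\<lambda>P. \<Prod>e\<in>P. succ_prob (X e)) ` paths E s m"
    then obtain P where "a = (\<Prod>e\<in>P. succ_prob (X e))" by auto
    moreover have "(\<Prod>e\<in>P. succ_prob (X e)) \<le> 1"
      by (rule prod_le_1) (use assms(2) in \<open>auto simp: succ_prob_def\<close>)
    ultimately show "a \<le> 1" by simp
  qed
  thus "L m * Max ((\<lambda>P. \<Prod>e\<in>P. succ_prob (X e)) ` paths E s m) \<le> L m"
    using assms(3) m by (metis mult_left_mono mult.right_neutral)
qed

lemma cost_lower:
  assumes "finite E" "\<forall>e. 0 \<le> X e" "\<forall>m\<in>Vk. 0 \<le> L m \<and> paths E s m \<noteq> {}"
    and "sum X E \<le> c"
  shows "exp (- c) * sum L Vk \<le> defender_cost (\<lambda>p. p) E s Vk L X"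
  unfolding defender_cost_def sum_distrib_left
proof (rule sum_mono)
  fix m assume m: "m \<in> Vk"
  obtain P where P: "P \<in> paths E s m" using assms(3) m by auto
  have PE: "P \<subseteq> E" using paths_sub[OF P] .
  have fP: "finite P" using PE assms(1) finite_subset by blast
  have "sum X P \<le> sum X E" using sum_mono2[OF assms(1) PE] assms(2) by auto
  hence "exp (- c) \<le> exp (- sum X P)" using assms(4) by simp
  also have "\<dots> = (\<Prod>e\<in>P. succ_prob (X e))"
    unfolding succ_prob_def using fP by (simp add: exp_sum[symmetric] sum_negf)
  also have "\<dots> \<le> Max ((\<lambda>P. \<Prod>e\<in>P. succ_prob (X e)) ` paths E s m)"
    using finite_paths[OF assms(1)] P by (intro Max_ge) auto
  finally show "exp (- c) * L m \<le> L m * Max ((\<lambda>P. \<Prod>e\<in>P. succ_prob (X e)) ` paths E s m)"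
    using assms(3) m by (simp add: mult.commute mult_left_mono)
qed

theorem proposition5:
  fixes Vs :: "'v set" and E :: "'v edge set" and s :: 'v
    and D :: "'d set" and V :: "'d \<Rightarrow> 'v set" and L :: "'v \<Rightarrow> real"
    and B :: "'d \<Rightarrow> real" and \<alpha> :: "'d \<Rightarrow> real"
    and xNE xopt :: "'d \<Rightarrow> 'v edge \<Rightarrow> real"
  assumes "finite Vs" and "E \<subseteq> Vs \<times> Vs" and "s \<in> Vs"
    and "finite D"
    and "\<forall>k\<in>D. V k \<subseteq> Vs - {s}"
    and "\<forall>k\<in>D. \<forall>m\<in>V k. 0 \<le> L m \<and> paths E s m \<noteq> {}"
    and "\<forall>k\<in>D. 0 \<le> B k"
    and "\<forall>k\<in>D. 0 < \<alpha> k \<and> \<alpha> k \<le> 1"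
    and "is_NE E s D V L B \<alpha> xNE"
    and "is_soc_opt E s D V L B xopt"
  shows "social_cost E s D V L xNE \<le> exp (\<Sum>k\<in>D. B k) * social_cost E s D V L xopt"
proof -
  have fE: "finite E" using assms(1,2) by (meson finite_SigmaI finite_subset)
  define S where "S = (\<Sum>k\<in>D. sum L (V k))"
  define Bt where "Bt = (\<Sum>k\<in>D. B k)"
  have ne: "\<forall>e. 0 \<le> total_inv D xNE e"
    using assms(9) unfolding is_NE_def strategy_def total_inv_def by (simp add: sum_nonneg)
  have 1: "social_cost E s D V L xNE \<le> S"
    unfolding social_cost_def S_def true_cost_def
    by (rule sum_mono, rule cost_upper[OF fE ne]) (use assms(6) in auto)
  have sf: "soc_feasible E D B xopt" using assms(10) unfolding is_soc_opt_def by blast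
  have on: "\<forall>e. 0 \<le> total_inv D xopt e"
    using sf unfolding soc_feasible_def total_inv_def by (simp add: sum_nonneg)
  have "sum (total_inv D xopt) E = (\<Sum>k\<in>D. \<Sum>e\<in>E. xopt k e)"
    unfolding total_inv_def by (rule sum.swap)
  also have "\<dots> \<le> Bt" using sf unfolding soc_feasible_def Bt_def by simp
  finally have sb: "sum (total_inv D xopt) E \<le> Bt" .
  have 2: "exp (- Bt) * S \<le> social_cost E s D V L xopt"
    unfolding S_def sum_distrib_left[of "exp (- Bt)" "\<lambda>k. sum L (V k)"]
    unfolding social_cost_def true_cost_def
    by (rule sum_mono, rule cost_lower[OF fE on _ sb]) (use assms(6) in auto)
  have "S = exp Bt * (exp (- Bt) * S)" by (simp add: exp_minus field_simps)
  also have "\<dots> \<le> exp Bt * social_cost E s D V L xopt" using 2 by simp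
  finally show ?thesis using 1 Bt_def by simp
qed

end
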